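(* Let $A$ and $B$ be C$^*$-algebras, where $A$ is unital with unit $1$. Let $T:A\to B$ be a linear map which is a $^*$-homomorphism at $1$. Then $T$ is a Jordan $^*$-homomorphism.
   Context: A map $T:A\to B$ between C$^*$-algebras is a $^*$-homomorphism at $z\in A$ if for all $a,b\in A$ with $ab^*=z$ one has $T(ab^* )=T(a)T(b)^*=T(z)$, and for all $c,d\in A$ with $c^*d=z$ one has $T(c^*d)=T(c)^*T(d)=T(z)$. A Jordan $^*$-homomorphism is a linear map $T$ with $T(a\circ b)=T(a)\circ T(b)$ for all $a,b$, where $a\circ b=\frac12(ab+ba)$, and $T(x^* )=T(x)^*$ for all $x$. *)

theory Defs
  imports "HOL-Analysis.Analysis"
begin

text \<open>A C*-algebra is modelled on a type 'a that is a (real) Banach algebra,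
 together with an explicit complex scalar multiplication sc (extending the real
 one) and an involution st satisfying the C*-identity.\<close>

definition cstar_algebra ::
  "(complex \<Rightarrow> 'a::{real_normed_algebra,banach} \<Rightarrow> 'a) \<Rightarrow> ('a \<Rightarrow> 'a) \<Rightarrow> bool" where
  "cstar_algebra sc st \<longleftrightarrow>
     (\<forall>r x. sc (complex_of_real r) x = r *\<^sub>R x) \<and>
     (\<forall>a x y. sc a (x + y) = sc a x + sc a y) \<and>
     (\<forall>a b x. sc (a + b) x = sc a x + sc b x) \<and>
     (\<forall>a b x. sc (a * b) x = sc a (sc b x)) \<and>
     (\<forall>a x y. sc a (x * y) = sc a x * y) \<and>
     (\<forall>a x y. sc a (x * y) = x * sc a y) \<and>
     (\<forall>a x. norm (sc a x) = cmod a * norm x) \<and>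
     (\<forall>x y. st (x + y) = st x + st y) \<and>
     (\<forall>a x. st (sc a x) = sc (cnj a) (st x)) \<and>
     (\<forall>x y. st (x * y) = st y * st x) \<and>
     (\<forall>x. st (st x) = x) \<and>
     (\<forall>x. norm (st x * x) = (norm x)\<^sup>2)"

definition clinear_map ::
  "(complex \<Rightarrow> 'a \<Rightarrow> 'a) \<Rightarrow> (complex \<Rightarrow> 'b \<Rightarrow> 'b) \<Rightarrow> ('a::plus \<Rightarrow> 'b::plus) \<Rightarrow> bool" where
  "clinear_map scA scB T \<longleftrightarrow>
     (\<forall>x y. T (x + y) = T x + T y) \<and> (\<forall>a x. T (scA a x) = scB a (T x))"

definition star_hom_at ::
  "('a \<Rightarrow> 'a) \<Rightarrow> ('b \<Rightarrow> 'b) \<Rightarrow> ('a::times \<Rightarrow> 'b::times) \<Rightarrow> 'a \<Rightarrow> bool" where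
  "star_hom_at stA stB T z \<longleftrightarrow>
     (\<forall>a b. a * stA b = z \<longrightarrow> T (a * stA b) = T a * stB (T b) \<and> T a * stB (T b) = T z) \<and>
     (\<forall>c d. stA c * d = z \<longrightarrow> T (stA c * d) = stB (T c) * T d \<and> stB (T c) * T d = T z)"

definition jordan_prod :: "'a::{times,plus,scaleR} \<Rightarrow> 'a \<Rightarrow> 'a" where
  "jordan_prod a b = (1/2::real) *\<^sub>R (a * b + b * a)"

definition jordan_star_hom ::
  "(complex \<Rightarrow> 'a \<Rightarrow> 'a) \<Rightarrow> ('a \<Rightarrow> 'a) \<Rightarrow> (complex \<Rightarrow> 'b \<Rightarrow> 'b) \<Rightarrow> ('b \<Rightarrow> 'b)
   \<Rightarrow> ('a::{times,plus,scaleR} \<Rightarrow> 'b::{times,plus,scaleR}) \<Rightarrow> bool" where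
  "jordan_star_hom scA stA scB stB T \<longleftrightarrow>
     clinear_map scA scB T \<and>
     (\<forall>a b. T (jordan_prod a b) = jordan_prod (T a) (T b)) \<and>
     (\<forall>x. T (stA x) = stB (T x))"

end

theory Submission imports Defs "HOL-Computational_Algebra.Formal_Power_Series" begin


locale cst =
  fixes sc :: "complex \<Rightarrow> 'a::{real_normed_algebra,banach} \<Rightarrow> 'a" and st :: "'a \<Rightarrow> 'a"
  assumes C: "cstar_algebra sc st"
begin

lemmas CC = C[unfolded cstar_algebra_def]

lemma sc_real: "sc (complex_of_real r) x = r *\<^sub>R x" by (rule CC[THEN conjunct1, rule_format])
lemma sc_add: "sc a (x + y) = sc a x + sc a y" by (rule CC[THEN conjunct2, THEN conjunct1, rule_format])
lemma sc_add2: "sc (a + b) x = sc a x + sc b x" by (rule CC[THEN conjunct2, THEN conjunct2, THEN conjunct1, rule_format])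
lemma sc_mult: "sc (a * b) x = sc a (sc b x)" by (rule CC[THEN conjunct2, THEN conjunct2, THEN conjunct2, THEN conjunct1, rule_format])
lemma sc_left: "sc a (x * y) = sc a x * y" by (rule CC[THEN conjunct2, THEN conjunct2, THEN conjunct2, THEN conjunct2, THEN conjunct1, rule_format])
lemma sc_right: "sc a (x * y) = x * sc a y" by (rule CC[THEN conjunct2, THEN conjunct2, THEN conjunct2, THEN conjunct2, THEN conjunct2, THEN conjunct1, rule_format])
lemma norm_sc: "norm (sc a x) = cmod a * norm x" by (rule CC[THEN conjunct2, THEN conjunct2, THEN conjunct2, THEN conjunct2, THEN conjunct2, THEN conjunct2, THEN conjunct1, rule_format])
lemma st_add: "st (x + y) = st x + st y" by (rule CC[THEN conjunct2, THEN conjunct2, THEN conjunct2, THEN conjunct2, THEN conjunct2, THEN conjunct2, THEN conjunct2, THEN conjunct1, rule_format])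
lemma st_sc: "st (sc a x) = sc (cnj a) (st x)" by (rule CC[THEN conjunct2, THEN conjunct2, THEN conjunct2, THEN conjunct2, THEN conjunct2, THEN conjunct2, THEN conjunct2, THEN conjunct2, THEN conjunct1, rule_format])
lemma st_mult: "st (x * y) = st y * st x" by (rule CC[THEN conjunct2, THEN conjunct2, THEN conjunct2, THEN conjunct2, THEN conjunct2, THEN conjunct2, THEN conjunct2, THEN conjunct2, THEN conjunct2, THEN conjunct1, rule_format])
lemma st_st[simp]: "st (st x) = x" by (rule CC[THEN conjunct2, THEN conjunct2, THEN conjunct2, THEN conjunct2, THEN conjunct2, THEN conjunct2, THEN conjunct2, THEN conjunct2, THEN conjunct2, THEN conjunct2, THEN conjunct1, rule_format])
lemma cid: "norm (st x * x) = (norm x)\<^sup>2" by (rule CC[THEN conjunct2, THEN conjunct2, THEN conjunct2, THEN conjunct2, THEN conjunct2, THEN conjunct2, THEN conjunct2, THEN conjunct2, THEN conjunct2, THEN conjunct2, THEN conjunct2, rule_format])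

lemma sc_one[simp]: "sc 1 x = x" using sc_real[of 1 x] by simp
lemma sc_zero[simp]: "sc 0 x = 0" using sc_real[of 0 x] by simp
lemma st_scaleR: "st (r *\<^sub>R x) = r *\<^sub>R st x"
  using st_sc[of "complex_of_real r" x] by (simp add: sc_real)
lemma st_zero[simp]: "st 0 = 0" using st_scaleR[of 0 0] by simp
lemma st_minus: "st (- x) = - st x" using st_scaleR[of "-1" x] by simp
lemma st_diff: "st (x - y) = st x - st y" using st_add[of x "- y"] by (simp add: st_minus)
lemma st_inj: "st x = st y \<Longrightarrow> x = y" by (drule arg_cong[where f=st]) simp

lemma norm_le_st: "norm x \<le> norm (st x)"
proof (cases "x = 0")
  case False
  have "(norm x)\<^sup>2 \<le> norm (st x) * norm x" using cid[of x] norm_mult_ineq[of "st x" x] by simp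
  then show ?thesis using False by (simp add: power2_eq_square)
qed simp

lemma norm_st[simp]: "norm (st x) = norm x"
  using norm_le_st[of x] norm_le_st[of "st x"] by simp

lemma st_zero_iff: "st x = 0 \<longleftrightarrow> x = 0" using st_inj[of x 0] by auto

lemma zero_if_mult_st: "x * st x = 0 \<Longrightarrow> x = 0"
  using cid[of "st x"] by (simp add: st_zero_iff)

lemma bl_st: "bounded_linear st"
  by (rule bounded_linear_intro[where K=1]) (auto simp: st_add st_scaleR)

lemma sc_diff: "sc a (x - y) = sc a x - sc a y"
proof -
  have "sc a (x - y) + sc a y = sc a x" by (simp only: sc_add[symmetric] diff_add_cancel)
  then show ?thesis by (simp add: eq_diff_eq)
qed
lemma sc_scaleR: "sc a (r *\<^sub>R x) = r *\<^sub>R sc a x"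
proof -
  have "sc a (r *\<^sub>R x) = sc a (sc (complex_of_real r) x)" by (simp only: sc_real)
  also have "\<dots> = sc (complex_of_real r * a) x" by (simp only: sc_mult[symmetric] mult.commute)
  also have "\<dots> = r *\<^sub>R sc a x" by (simp only: sc_mult sc_real)
  finally show ?thesis .
qed
lemma sc_0[simp]: "sc a 0 = 0" using sc_diff[of a 0 0] by simp

end



locale ucst = cst sc st
  for sc :: "complex \<Rightarrow> 'a::{real_normed_algebra,ring_1,banach} \<Rightarrow> 'a" and st
begin

lemma st_one[simp]: "st 1 = 1"
proof -
  have "st (st 1 * 1) = st 1 * st (st 1)" by (rule st_mult)
  then show ?thesis by simp
qed

lemma norm_one_le: "norm (1::'a) \<le> 1"
proof -
  have "norm (1::'a) = (norm (1::'a))\<^sup>2" using cid[of 1] by simp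
  then have "norm (1::'a) * (norm (1::'a) - 1) = 0" by (simp add: power2_eq_square algebra_simps)
  then have "norm (1::'a) = 0 \<or> norm (1::'a) = 1" by simp
  then show ?thesis by auto
qed

lemma norm_pow_le: "norm (y ^ n) \<le> norm (y::'a) ^ n"
proof (induction n)
  case 0 then show ?case using norm_one_le by simp
next
  case (Suc n)
  have "norm (y ^ Suc n) \<le> norm y * norm (y ^ n)" by (simp add: norm_mult_ineq)
  also have "\<dots> \<le> norm y * norm y ^ n" by (simp add: Suc mult_left_mono)
  finally show ?case by simp
qed

lemma neumann:
  assumes "norm (y::'a) \<le> 1/2"
  shows "\<exists>w. (1 - y) * w = 1 \<and> norm w \<le> 2"
proof -
  have g: "summable (\<lambda>n. norm y ^ n)" using assms by (simp add: summable_geometric)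
  have sn: "summable (\<lambda>n. norm (y ^ n))"
    by (rule summable_comparison_test[OF _ g]) (auto intro: norm_pow_le)
  then have s: "summable (\<lambda>n. y ^ n)" by (rule summable_norm_cancel)
  define w where "w = (\<Sum>n. y ^ n)"
  have "(1 - y) * w = (\<Sum>n. (1 - y) * y ^ n)" unfolding w_def using s by (simp add: suminf_mult)
  also have "\<dots> = (\<Sum>n. y ^ n - y ^ Suc n)" by (simp only: left_diff_distrib mult_1_left power_Suc)
  also have "\<dots> = 1"
  proof -
    have "(\<lambda>n. y ^ n) \<longlonglongrightarrow> 0"
    proof -
      have g0: "(\<lambda>n. norm y ^ n) \<longlonglongrightarrow> 0" using assms by (intro LIMSEQ_power_zero) auto
      show ?thesis
        by (rule Lim_null_comparison[OF _ g0]) (auto intro!: always_eventually norm_pow_le)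
    qed
    from telescope_sums'[OF this] have "(\<lambda>n. y ^ n - y ^ Suc n) sums (y ^ 0 - 0)" .
    then show ?thesis by (simp only: power_0 diff_zero sums_unique[symmetric])
  qed
  finally have 1: "(1 - y) * w = 1" .
  have "norm w \<le> (\<Sum>n. norm (y ^ n))" unfolding w_def using sn by (rule summable_norm)
  also have "\<dots> \<le> (\<Sum>n. norm y ^ n)" using sn g by (intro suminf_le norm_pow_le) auto
  also have "\<dots> = 1 / (1 - norm y)" using assms by (simp add: suminf_geometric)
  also have "\<dots> \<le> 2" using assms norm_ge_zero[of y] by (simp add: field_simps)
  finally have "norm w \<le> 2" .
  with 1 show ?thesis by (intro exI[of _ w] conjI)
qed

end



definition cf :: "nat \<Rightarrow> real" where "cf n = ((1/2::real) gchoose n) * (-1)^n"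

lemma gch_step: "of_nat (Suc k) * (a gchoose Suc k) = (a - of_nat k) * (a gchoose k)" for a :: real
  using gbinomial_absorption[of k a] gbinomial_absorb_comp[of a k] by simp

lemma gch_half_le: "\<bar>(1/2::real) gchoose n\<bar> \<le> 1"
proof (induction n)
  case (Suc k)
  have e: "real (Suc k) * ((1/2::real) gchoose Suc k) = (1/2 - real k) * ((1/2) gchoose k)"
    using gch_step[of k "1/2"] by simp
  have "real (Suc k) * \<bar>(1/2::real) gchoose Suc k\<bar> = \<bar>1/2 - real k\<bar> * \<bar>(1/2) gchoose k\<bar>"
    using arg_cong[OF e, of abs] by (simp add: abs_mult)
  also have "\<dots> \<le> real (Suc k) * 1"
    using Suc by (intro mult_mono) auto
  finally show ?case by (simp del: of_nat_Suc)
qed simp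

lemma cf_le: "\<bar>cf n\<bar> \<le> 1" by (simp add: cf_def abs_mult gch_half_le)

lemma cf_conv: "(\<Sum>i\<le>k. cf i * cf (k - i)) = (if k = 0 then 1 else if k = 1 then -1 else 0)"
proof -
  have t: "cf i * cf (k - i) = (-1)^k * (((1/2::real) gchoose i) * ((1/2) gchoose (k - i)))"
    if "i \<in> {0..k}" for i
  proof -
    have "cf i * cf (k - i) = ((1/2::real) gchoose i) * ((1/2) gchoose (k - i)) * ((-1)^i * (-1)^(k-i))"
      unfolding cf_def by (simp only: mult_ac)
    also have "(-1::real)^i * (-1)^(k-i) = (-1)^(i + (k - i))" by (rule power_add[symmetric])
    also have "i + (k - i) = k" using that by simp
    finally show ?thesis by (simp only: mult_ac)
  qed
  have "(\<Sum>i\<le>k. cf i * cf (k - i)) = (\<Sum>i\<in>{0..k}. (-1)^k * (((1/2::real) gchoose i) * ((1/2) gchoose (k - i))))"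
    unfolding atLeast0AtMost[symmetric] by (rule sum.cong[OF refl t])
  also have "\<dots> = (-1)^k * ((1/2 + 1/2::real) gchoose k)"
    by (simp only: sum_distrib_left[symmetric] gbinomial_Vandermonde)
  also have "(1/2 + 1/2::real) = 1" by simp
  also have "(1::real) gchoose k = real (1 choose k)" by (metis binomial_gbinomial of_nat_1)
  finally have e: "(\<Sum>i\<le>k. cf i * cf (k - i)) = (-1)^k * real (1 choose k)" .
  show ?thesis
  proof (cases k)
    case 0 then show ?thesis using e by simp
  next
    case (Suc m)
    show ?thesis
    proof (cases m)
      case 0 then show ?thesis using e Suc by simp
    next
      case (Suc n)
      then have "1 choose k = 0" using \<open>k = Suc m\<close> by (simp add: binomial_eq_0)
      then show ?thesis using e \<open>k = Suc m\<close> Suc by simp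
    qed
  qed
qed

context ucst begin

lemma st_pow: "st (y ^ n) = st y ^ n"
  by (induction n) (simp_all add: st_mult power_commutes)

lemma comm_pow: "h * y = y * h \<Longrightarrow> h * y ^ n = y ^ n * (h::'a)"
  by (induction n) (simp_all add: mult.assoc[symmetric], metis mult.assoc)

lemma sqrt_ex:
  assumes y: "norm y \<le> 1/4"
  shows "\<exists>k. k * k = 1 - y \<and> (st y = y \<longrightarrow> st k = k) \<and> (\<forall>h. h * y = y * h \<longrightarrow> h * k = k * h)"
proof -
  define a where "a n = cf n *\<^sub>R y ^ n" for n
  have an: "norm (a n) \<le> (1/4) ^ n" for n
  proof -
    have "norm (a n) = \<bar>cf n\<bar> * norm (y ^ n)" by (simp add: a_def)
    also have "\<dots> \<le> 1 * norm y ^ n"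
      using cf_le norm_pow_le by (intro mult_mono) auto
    also have "\<dots> \<le> (1/4) ^ n" using y by (simp add: power_mono)
    finally show ?thesis .
  qed
  have sn: "summable (\<lambda>n. norm (a n))"
    by (rule summable_comparison_test[OF _ summable_geometric[of "1/4::real"]]) (use an in auto)
  have s: "summable a" using sn by (rule summable_norm_cancel)
  define k where "k = suminf a"
  have "(\<lambda>n. \<Sum>i\<le>n. a i * a (n - i)) sums (k * k)"
    unfolding k_def by (rule Cauchy_product_sums[OF sn sn])
  moreover have "(\<lambda>n. \<Sum>i\<le>n. a i * a (n - i)) = (\<lambda>n. if n = 0 then 1 else if n = 1 then - y else 0)"
  proof
    fix n
    have "(\<Sum>i\<le>n. a i * a (n - i)) = (\<Sum>i\<le>n. (cf i * cf (n - i)) *\<^sub>R y ^ n)"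
      by (intro sum.cong refl) (auto simp: a_def power_add[symmetric])
    also have "\<dots> = (\<Sum>i\<le>n. cf i * cf (n - i)) *\<^sub>R y ^ n" by (simp add: scaleR_sum_left)
    finally show "(\<Sum>i\<le>n. a i * a (n - i)) = (if n = 0 then 1 else if n = 1 then - y else 0)"
      by (simp add: cf_conv)
  qed
  moreover have "(\<lambda>n. if n = 0 then 1 else if n = 1 then - y else 0) sums (1 - y)"
  proof -
    have "(\<lambda>n. if n = 0 then 1 else if n = 1 then - y else 0) sums (\<Sum>n\<in>{0,1::nat}. if n = 0 then 1 else if n = 1 then - y else 0)"
      by (rule sums_finite) auto
    then show ?thesis by simp
  qed
  ultimately have kk: "k * k = 1 - y" by (metis sums_unique2)
  have stk: "st k = k" if "st y = y"
  proof -
    have "st k = (\<Sum>n. st (a n))" unfolding k_def using bounded_linear.suminf[OF bl_st s] by simp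
    also have "(\<lambda>n. st (a n)) = a" by (auto simp: a_def st_scaleR st_pow that)
    finally show ?thesis by (simp add: k_def)
  qed
  have comm: "h * k = k * h" if "h * y = y * h" for h
  proof -
    have "h * k = (\<Sum>n. h * a n)" unfolding k_def using s by (simp add: suminf_mult)
    also have "(\<lambda>n. h * a n) = (\<lambda>n. a n * h)"
      by (auto simp: a_def comm_pow[OF that])
    also have "(\<Sum>n. a n * h) = k * h" unfolding k_def using s by (simp add: suminf_mult2)
    finally show ?thesis .
  qed
  show ?thesis using kk stk comm by blast
qed


lemma scsc: "sc a x * sc b y = sc (a * b) (x * y)"
  by (metis sc_left sc_right sc_mult)

lemma sc_neg_i: "sc (- \<i>) z + sc \<i> z = 0"
  by (metis sc_add2 add.left_inverse sc_zero)

lemma herm_unitary: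
  assumes h: "st h = h" "norm h \<le> 1/2"
  shows "\<exists>u. u * st u = 1 \<and> st u * u = 1 \<and> h = (1/2) *\<^sub>R (u + st u)"
proof -
  have ny: "norm (h * h) \<le> 1/4"
  proof -
    have "norm (h * h) \<le> norm h * norm h" by (rule norm_mult_ineq)
    also have "\<dots> \<le> (1/2) * (1/2)" using h(2) by (intro mult_mono) auto
    finally show ?thesis by simp
  qed
  have sy: "st (h * h) = h * h" by (simp add: st_mult h(1))
  obtain k where kk: "k * k = 1 - h * h" and sk: "st k = k" and hk: "h * k = k * h"
  proof -
    have c: "h * (h * h) = (h * h) * h" by (simp add: mult.assoc)
    from sqrt_ex[OF ny] obtain k where "k * k = 1 - h * h" "st (h * h) = h * h \<longrightarrow> st k = k"
      "\<forall>g. g * (h * h) = (h * h) * g \<longrightarrow> g * k = k * g" by blast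
    with sy c that show thesis by blast
  qed
  define u where "u = h + sc \<i> k"
  have su: "st u = h + sc (- \<i>) k" by (simp add: u_def st_add st_sc sk h(1))
  have ml: "x * sc c z = sc c (x * z)" for x z c by (simp add: sc_right)
  have mr: "sc c x * z = sc c (x * z)" for x z c by (simp add: sc_left)
  have ii: "sc \<i> (sc (- \<i>) z) = z" "sc (- \<i>) (sc \<i> z) = z" for z
    by (simp_all add: sc_mult[symmetric])
  have e1: "u * st u = h * h + k * k + (sc (- \<i>) (h * k) + sc \<i> (h * k))"
  proof -
    have "u * st u = h * h + sc \<i> k * h + (h * sc (- \<i>) k + sc \<i> k * sc (- \<i>) k)"
      unfolding su unfolding u_def by (simp only: distrib_left distrib_right)
    also have "\<dots> = h * h + sc \<i> (h * k) + (sc (- \<i>) (h * k) + k * k)"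
      by (simp only: ml mr ii hk)
    finally show ?thesis by (simp only: add_ac)
  qed
  have e2: "st u * u = h * h + k * k + (sc (- \<i>) (h * k) + sc \<i> (h * k))"
  proof -
    have "st u * u = h * h + sc (- \<i>) k * h + (h * sc \<i> k + sc (- \<i>) k * sc \<i> k)"
      unfolding su unfolding u_def by (simp only: distrib_left distrib_right)
    also have "\<dots> = h * h + sc (- \<i>) (h * k) + (sc \<i> (h * k) + k * k)"
      by (simp only: ml mr ii hk)
    finally show ?thesis by (simp only: add_ac)
  qed
  have e3: "u + st u = h + h + (sc (- \<i>) k + sc \<i> k)"
    unfolding su unfolding u_def by (simp only: add_ac)
  have "u * st u = 1" "st u * u = 1" unfolding e1 e2 kk sc_neg_i by simp_all
  moreover have "h = (1/2) *\<^sub>R (u + st u)"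
  proof -
    have "u + st u = h + h" unfolding e3 sc_neg_i by simp
    also have "h + h = 2 *\<^sub>R h" by (rule scaleR_2[symmetric])
    finally show ?thesis by simp
  qed
  ultimately have "u * st u = 1 \<and> st u * u = 1 \<and> h = (1/2) *\<^sub>R (u + st u)" by (intro conjI)
  then show ?thesis by (rule exI)
qed

end



lemma small_le:
  fixes a M d :: real
  assumes d: "0 < d" and h: "\<forall>t. 0 < t \<and> t \<le> d \<longrightarrow> a \<le> M * t"
  shows "a \<le> 0"
proof (rule ccontr)
  assume "\<not> a \<le> 0"
  then have a: "a > 0" by simp
  define t where "t = min d (a / (2 * (\<bar>M\<bar> + 1)))"
  have t0: "0 < t" using a d by (simp add: t_def)
  have "t \<le> d" by (simp add: t_def)
  with h t0 have "a \<le> M * t" by blast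
  also have "\<dots> \<le> \<bar>M\<bar> * t" using t0 by (intro mult_right_mono) auto
  also have "\<dots> \<le> \<bar>M\<bar> * (a / (2 * (\<bar>M\<bar> + 1)))" by (intro mult_left_mono) (auto simp: t_def)
  also have "\<dots> < a"
  proof -
    have "\<bar>M\<bar> * (a / (2 * (\<bar>M\<bar> + 1))) = a * (\<bar>M\<bar> / (2 * (\<bar>M\<bar> + 1)))" by simp
    also have "\<bar>M\<bar> / (2 * (\<bar>M\<bar> + 1)) < 1" by (simp add: field_simps)
    then have "a * (\<bar>M\<bar> / (2 * (\<bar>M\<bar> + 1))) < a * 1" using a by (intro mult_strict_left_mono) auto
    finally show ?thesis by simp
  qed
  finally show False by simp
qed

lemma poly2:
  fixes c1 c2 :: "'v::real_normed_vector"
  assumes d: "0 < d" and h: "\<forall>t. 0 < t \<and> t \<le> d \<longrightarrow> norm (t *\<^sub>R c1 + (t * t) *\<^sub>R c2) \<le> K * (t * t * t)"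
  shows "c1 = 0 \<and> c2 = 0"
proof -
  have d1: "0 < min d 1" using d by simp
  have "norm c1 \<le> 0"
  proof (rule small_le[OF d1], intro allI impI)
    fix t :: real assume t: "0 < t \<and> t \<le> min d 1"
    have "t * norm c1 = norm (t *\<^sub>R c1)" using t by simp
    also have "\<dots> = norm ((t *\<^sub>R c1 + (t * t) *\<^sub>R c2) - (t * t) *\<^sub>R c2)" by simp
    also have "\<dots> \<le> norm (t *\<^sub>R c1 + (t * t) *\<^sub>R c2) + norm ((t * t) *\<^sub>R c2)" by (rule norm_triangle_ineq4)
    also have "\<dots> \<le> K * (t * t * t) + (t * t) * norm c2" using h t by simp
    also have "\<dots> \<le> t * ((\<bar>K\<bar> + norm c2) * t)"
    proof -
      have "K * (t * t * t) \<le> \<bar>K\<bar> * (t * t * t)" using t by (intro mult_right_mono) auto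
      also have "\<dots> \<le> \<bar>K\<bar> * (t * t * 1)" using t by (intro mult_left_mono mult_left_mono) auto
      finally show ?thesis by (simp add: algebra_simps)
    qed
    finally show "norm c1 \<le> (\<bar>K\<bar> + norm c2) * t" using t by simp
  qed
  then have c1: "c1 = 0" by simp
  have "norm c2 \<le> 0"
  proof (rule small_le[OF d], intro allI impI)
    fix t :: real assume t: "0 < t \<and> t \<le> d"
    have "(t * t) * norm c2 = norm ((t * t) *\<^sub>R c2)" using t by simp
    also have "\<dots> \<le> K * (t * t * t)" using h t c1 by simp
    finally have "(t * t) * norm c2 \<le> (t * t) * (K * t)" by (simp add: algebra_simps)
    then show "norm c2 \<le> K * t" using t by (simp add: mult_le_cancel_left_pos)
  qed
  then show ?thesis using c1 by simp
qed

locale mainloc = A: ucst scA stA + B: cst scB stB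
  for scA :: "complex \<Rightarrow> 'a::{real_normed_algebra,ring_1,banach} \<Rightarrow> 'a" and stA
  and scB :: "complex \<Rightarrow> 'b::{real_normed_algebra,banach} \<Rightarrow> 'b" and stB +
  fixes T :: "'a \<Rightarrow> 'b"
  assumes lin: "clinear_map scA scB T" and hom: "star_hom_at stA stB T 1"
begin

lemma Tadd: "T (x + y) = T x + T y" using lin unfolding clinear_map_def by blast
lemma Tsc: "T (scA a x) = scB a (T x)" using lin unfolding clinear_map_def by blast
lemma TscR: "T (r *\<^sub>R x) = r *\<^sub>R T x"
  using Tsc[of "complex_of_real r" x] by (simp add: A.sc_real B.sc_real)
lemma T0[simp]: "T 0 = 0" using TscR[of 0 0] by simp
lemma Tminus: "T (- x) = - T x" using TscR[of "-1" x] by simp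
lemma Tdiff: "T (x - y) = T x - T y" using Tadd[of x "- y"] by (simp add: Tminus)

lemma H1: "a * stA b = 1 \<Longrightarrow> T a * stB (T b) = T 1"
  using hom unfolding star_hom_at_def by metis
lemma H2: "stA c * d = 1 \<Longrightarrow> stB (T c) * T d = T 1"
  using hom unfolding star_hom_at_def by metis

lemma stp: "stB (T 1) = T 1"
proof -
  have e: "T 1 * stB (T 1) = T 1" using H1[of 1 1] by simp
  have "stB (T 1) = stB (T 1 * stB (T 1))" using e by simp
  also have "\<dots> = T 1 * stB (T 1)" by (simp add: B.st_mult)
  finally show ?thesis using e by simp
qed

lemma ppp: "T 1 * T 1 = T 1" using H1[of 1 1] stp by simp

lemma np: "norm (T 1) \<le> 1"
proof -
  have "norm (T 1) = (norm (T 1))\<^sup>2" using B.cid[of "T 1"] stp ppp by simp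
  then have "norm (T 1) * (norm (T 1) - 1) = 0" by (simp add: power2_eq_square algebra_simps)
  then have "norm (T 1) = 0 \<or> norm (T 1) = 1" by simp
  then show ?thesis by auto
qed

lemma unit_T:
  assumes u1: "u * stA u = 1" and u2: "stA u * u = 1"
  shows "T 1 * T u = T u \<and> T u * T 1 = T u \<and> norm (T u) \<le> 1"
proof -
  define U where "U = T u"
  define p where "p = T 1"
  have h1: "U * stB U = p" using H1[OF u1] by (simp add: U_def p_def)
  have h2: "stB U * U = p" using H2[OF u2] by (simp add: U_def p_def)
  have sp: "stB p = p" and pp: "p * p = p" using stp ppp by (simp_all add: p_def)
  have pU: "p * U = U * p"
  proof -
    have "p * U = (U * stB U) * U" by (simp add: h1)
    also have "\<dots> = U * (stB U * U)" by (simp add: mult.assoc)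
    finally show ?thesis by (simp add: h2)
  qed
  have sE: "stB (U - p * U) = stB U - stB U * p" by (simp add: B.st_diff B.st_mult sp)
  have "(U - p * U) * stB (U - p * U) = U * stB U - (U * stB U) * p - p * (U * stB U) + p * (U * stB U) * p"
    unfolding sE by (simp add: algebra_simps)
  also have "\<dots> = 0" by (simp add: h1 pp)
  finally have "U - p * U = 0" by (rule B.zero_if_mult_st)
  then have a: "p * U = U" by simp
  have "(norm (stB U))\<^sup>2 = norm (stB (stB U) * stB U)" by (rule B.cid[symmetric])
  also have "\<dots> = norm p" by (simp add: h1)
  also have "\<dots> \<le> 1" using np by (simp add: p_def)
  finally have "(norm U)\<^sup>2 \<le> 1" by simp
  then have "norm U \<le> 1" by (simp add: power_le_one_iff abs_le_iff)
  then show ?thesis using a pU by (simp add: U_def p_def)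
qed

lemma herm_small:
  assumes "stA h = h" "norm h \<le> 1/2"
  shows "T 1 * T h = T h \<and> T h * T 1 = T h \<and> norm (T h) \<le> 1"
proof -
  obtain u where u1: "u * stA u = 1" and u2: "stA u * u = 1" and hu: "h = (1/2) *\<^sub>R (u + stA u)"
    using A.herm_unitary[OF assms] by blast
  have v1: "stA u * stA (stA u) = 1" and v2: "stA (stA u) * stA u = 1" using u1 u2 by simp_all
  have Th: "T h = (1/2) *\<^sub>R (T u + T (stA u))" by (subst hu) (simp add: TscR Tadd)
  note a = unit_T[OF u1 u2] and b = unit_T[OF v1 v2]
  have "T 1 * T h = T h" "T h * T 1 = T h" unfolding Th
    using a b by (simp_all add: distrib_left distrib_right)
  moreover have "norm (T h) \<le> 1"
  proof -
    have "norm (T h) \<le> (1/2) * (norm (T u) + norm (T (stA u)))" unfolding Th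
      by (simp add: norm_triangle_ineq)
    also have "\<dots> \<le> (1/2) * (1 + 1)" using a b by (intro mult_left_mono add_mono) auto
    finally show ?thesis by simp
  qed
  ultimately show ?thesis by simp
qed

lemma herm_T:
  assumes h: "stA h = h"
  shows "T 1 * T h = T h \<and> T h * T 1 = T h \<and> norm (T h) \<le> 2 * norm h"
proof (cases "h = 0")
  case True then show ?thesis by simp
next
  case False
  define r where "r = 2 * norm h"
  have r: "r > 0" using False by (simp add: r_def)
  define g where "g = (1 / r) *\<^sub>R h"
  have sg: "stA g = g" using h by (simp add: g_def A.st_scaleR)
  have ng: "norm g = 1/2" using r by (simp add: g_def r_def)
  have hg: "h = r *\<^sub>R g" using r by (simp add: g_def)
  note G = herm_small[OF sg, unfolded ng, simplified]
  have "T h = r *\<^sub>R T g" by (simp add: hg TscR)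
  then show ?thesis using G r
    by (simp add: r_def mult_left_mono)
qed

lemma sc_neg: "scA (- a) z = - scA a z"
  using A.sc_add2[of "- a" a z] by (simp add: eq_neg_iff_add_eq_0)

lemma all_T: "T 1 * T x = T x \<and> T x * T 1 = T x \<and> norm (T x) \<le> 4 * norm x"
proof -
  define h1 where "h1 = (1/2) *\<^sub>R (x + stA x)"
  define h2 where "h2 = (1/2) *\<^sub>R scA (- \<i>) (x - stA x)"
  have s1: "stA h1 = h1" by (simp add: h1_def A.st_scaleR A.st_add add.commute)
  have s2: "stA h2 = h2"
  proof -
    have "stA h2 = (1/2) *\<^sub>R scA \<i> (stA x - x)" by (simp add: h2_def A.st_scaleR A.st_sc A.st_diff)
    also have "scA \<i> (stA x - x) = scA (- \<i>) (x - stA x)"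
      by (metis sc_neg A.sc_diff minus_diff_eq)
    finally show ?thesis by (simp add: h2_def)
  qed
  have ii: "scA \<i> (scA (- \<i>) z) = z" for z by (simp add: A.sc_mult[symmetric])
  have xe: "x = h1 + scA \<i> h2"
  proof -
    have "scA \<i> h2 = (1/2) *\<^sub>R (x - stA x)" by (simp add: h2_def A.sc_scaleR ii)
    then have "h1 + scA \<i> h2 = (1/2) *\<^sub>R ((x + stA x) + (x - stA x))"
      by (simp only: h1_def scaleR_add_right)
    also have "(x + stA x) + (x - stA x) = 2 *\<^sub>R x" by (simp add: scaleR_2)
    finally show ?thesis by simp
  qed
  have n1: "norm h1 \<le> norm x"
  proof -
    have "norm h1 = (1/2) * norm (x + stA x)" by (simp add: h1_def)
    also have "\<dots> \<le> (1/2) * (norm x + norm (stA x))" by (intro mult_left_mono norm_triangle_ineq) auto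
    finally show ?thesis by simp
  qed
  have n2: "norm h2 \<le> norm x"
  proof -
    have "norm h2 = (1/2) * norm (x - stA x)" by (simp add: h2_def A.norm_sc)
    also have "\<dots> \<le> (1/2) * (norm x + norm (stA x))" by (intro mult_left_mono norm_triangle_ineq4) auto
    finally show ?thesis by simp
  qed
  note a = herm_T[OF s1] and b = herm_T[OF s2]
  have Tx: "T x = T h1 + scB \<i> (T h2)" by (subst xe) (simp add: Tadd Tsc)
  have "T 1 * T x = T x" unfolding Tx using a b by (simp add: distrib_left B.sc_right[symmetric])
  moreover have "T x * T 1 = T x" unfolding Tx using a b by (simp add: distrib_right B.sc_left[symmetric])
  moreover have "norm (T x) \<le> 4 * norm x"
  proof -
    have "norm (T x) \<le> norm (T h1) + norm (scB \<i> (T h2))" unfolding Tx by (rule norm_triangle_ineq)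
    also have "\<dots> = norm (T h1) + norm (T h2)" by (simp add: B.norm_sc)
    also have "\<dots> \<le> 2 * norm h1 + 2 * norm h2" using a b by (intro add_mono) auto
    also have "\<dots> \<le> 4 * norm x" using n1 n2 by simp
    finally show ?thesis .
  qed
  ultimately show ?thesis by blast
qed


abbreviation S where "S x \<equiv> stB (T (stA x))"

lemma S_props: "T 1 * S x = S x" "S x * T 1 = S x" "norm (S x) \<le> 4 * norm x"
proof -
  have a: "T 1 * T (stA x) = T (stA x)" "T (stA x) * T 1 = T (stA x)" "norm (T (stA x)) \<le> 4 * norm x"
    using all_T[of "stA x"] by simp_all
  have "T 1 * S x = stB (T (stA x) * T 1)" by (simp add: B.st_mult stp)
  then show "T 1 * S x = S x" using a by simp
  have "S x * T 1 = stB (T 1 * T (stA x))" by (simp add: B.st_mult stp)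
  then show "S x * T 1 = S x" using a by simp
  show "norm (S x) \<le> 4 * norm x" using a by simp
qed

lemma Sadd: "S (x + y) = S x + S y" by (simp add: A.st_add Tadd B.st_add)
lemma SscR: "S (r *\<^sub>R x) = r *\<^sub>R S x" by (simp add: A.st_scaleR TscR B.st_scaleR)
lemma S1: "S 1 = T 1" by (simp add: stp)

lemma key: "S x = T x \<and> S (x * x) = T x * S x"
proof -
  define X where "X = T x"
  define p where "p = T 1"
  define d where "d = min 1 (1 / (2 * (norm x + 1)))"
  have nx1: "0 < norm x + 1" by (metis norm_ge_zero add_nonneg_pos zero_less_one)
  have d0: "0 < d" using nx1 by (simp add: d_def)
  define K where "K = 8 * norm x ^ 3 + norm X * norm (S (x * x)) + norm X * (8 * norm x ^ 3)"
  have pp: "p * p = p" by (simp add: p_def ppp)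
  have Xp: "X * p = X" using all_T[of x] by (simp add: X_def p_def)
  have pS: "p * S z = S z" for z using S_props by (simp add: p_def)
  have bound: "norm (t *\<^sub>R (S x - X) + (t * t) *\<^sub>R (S (x * x) - X * S x)) \<le> K * (t * t * t)"
    if t: "0 < t" "t \<le> d" for t
  proof -
    have t1: "t \<le> 1" using t by (simp add: d_def)
    have tx: "t * norm x \<le> 1/2"
    proof -
      have "t * norm x \<le> (1 / (2 * (norm x + 1))) * norm x" using t by (intro mult_right_mono) (auto simp: d_def)
      also have "\<dots> \<le> 1/2" using nx1 by (simp add: field_simps)
      finally show ?thesis .
    qed
    define y where "y = t *\<^sub>R x"
    have ny: "norm y = t * norm x" using t by (simp add: y_def)
    obtain w where w1: "(1 - y) * w = 1" and nw: "norm w \<le> 2"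
      using A.neumann[of y] tx ny by auto
    have E0: "T (1 - y) * S w = p"
      using H1[of "1 - y" "stA w"] w1 by (simp add: p_def)
    have wr: "w = 1 + y * w" using w1 by (simp add: left_diff_distrib algebra_simps)
    define z where "z = y * y * y * w"
    have we: "w = 1 + y + y * y + z"
    proof -
      have "w = 1 + y * (1 + y * (1 + y * w))" using wr by simp
      then show ?thesis by (simp add: z_def distrib_left mult.assoc add.assoc)
    qed
    have yy: "y * y = (t * t) *\<^sub>R (x * x)" by (simp add: y_def)
    have Sw: "S w = p + t *\<^sub>R S x + (t * t) *\<^sub>R S (x * x) + S z"
      by (subst we) (simp only: Sadd S1 yy p_def, simp only: y_def SscR)
    have T1y: "T (1 - y) = p - t *\<^sub>R X" by (simp add: Tdiff TscR y_def X_def p_def)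
    have E: "(p - t *\<^sub>R X) * (p + t *\<^sub>R S x + (t * t) *\<^sub>R S (x * x) + S z) = p"
      using E0 by (simp only: T1y Sw)
    have expand: "(p - t *\<^sub>R X) * (p + t *\<^sub>R S x + (t * t) *\<^sub>R S (x * x) + S z)
      = p + t *\<^sub>R S x + (t * t) *\<^sub>R S (x * x) + S z - t *\<^sub>R X - (t * t) *\<^sub>R (X * S x)
        - (t * t * t) *\<^sub>R (X * S (x * x)) - t *\<^sub>R (X * S z)"
      by (simp add: algebra_simps pp pS Xp)
    have main: "t *\<^sub>R (S x - X) + (t * t) *\<^sub>R (S (x * x) - X * S x)
       = (t * t * t) *\<^sub>R (X * S (x * x)) + t *\<^sub>R (X * S z) - S z"
    proof -
      have "p + t *\<^sub>R S x + (t * t) *\<^sub>R S (x * x) + S z - t *\<^sub>R X - (t * t) *\<^sub>R (X * S x)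
        - (t * t * t) *\<^sub>R (X * S (x * x)) - t *\<^sub>R (X * S z) = p" using E expand by simp
      then show ?thesis by (simp add: algebra_simps)
    qed
    have nz: "norm z \<le> (t * norm x) ^ 3 * 2"
    proof -
      have "norm z \<le> norm y * norm y * norm y * norm w"
        unfolding z_def by (meson norm_mult_ineq order_trans mult_right_mono mult_left_mono norm_ge_zero mult_nonneg_nonneg)
      also have "\<dots> \<le> (t * norm x) * (t * norm x) * (t * norm x) * 2"
        using nw by (simp add: ny mult_left_mono t(1) less_imp_le)
      finally show ?thesis by (simp add: power3_eq_cube)
    qed
    have nSz: "norm (S z) \<le> t * t * t * (8 * norm x ^ 3)"
    proof -
      have "norm (S z) \<le> 4 * norm z" using S_props(3) .
      also have "\<dots> \<le> 4 * ((t * norm x) ^ 3 * 2)" using nz by simp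
      finally show ?thesis by (simp add: power_mult_distrib power3_eq_cube mult_ac)
    qed
    have "norm (t *\<^sub>R (S x - X) + (t * t) *\<^sub>R (S (x * x) - X * S x))
        \<le> norm ((t * t * t) *\<^sub>R (X * S (x * x))) + norm (t *\<^sub>R (X * S z)) + norm (S z)"
      unfolding main by (meson norm_triangle_ineq norm_triangle_ineq4 order_trans add_right_mono)
    also have "\<dots> \<le> (t * t * t) * (norm X * norm (S (x * x))) + t * (norm X * (t * t * t * (8 * norm x ^ 3)))
        + t * t * t * (8 * norm x ^ 3)"
    proof (intro add_mono)
      show "norm ((t * t * t) *\<^sub>R (X * S (x * x))) \<le> t * t * t * (norm X * norm (S (x * x)))"
        using t norm_mult_ineq[of X "S (x * x)"] by (simp add: mult_left_mono)
      have "norm (X * S z) \<le> norm X * (t * t * t * (8 * norm x ^ 3))"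
        by (meson norm_mult_ineq order_trans mult_left_mono nSz norm_ge_zero)
      then show "norm (t *\<^sub>R (X * S z)) \<le> t * (norm X * (t * t * t * (8 * norm x ^ 3)))"
        using t by (simp add: mult_left_mono)
    qed (rule nSz)
    also have "\<dots> \<le> K * (t * t * t)"
    proof -
      have "t * (norm X * (t * t * t * (8 * norm x ^ 3))) \<le> 1 * (norm X * (t * t * t * (8 * norm x ^ 3)))"
        using t t1 by (intro mult_right_mono) auto
      then show ?thesis by (simp add: K_def algebra_simps)
    qed
    finally show ?thesis .
  qed
  have "S x - X = 0 \<and> S (x * x) - X * S x = 0"
    by (rule poly2[OF d0]) (use bound in auto)
  then show ?thesis by (simp add: X_def)
qed

end

theorem theorem2p5:
  fixes scA :: "complex \<Rightarrow> 'a::{real_normed_algebra,ring_1,banach} \<Rightarrow> 'a"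
    and stA :: "'a \<Rightarrow> 'a"
    and scB :: "complex \<Rightarrow> 'b::{real_normed_algebra,banach} \<Rightarrow> 'b"
    and stB :: "'b \<Rightarrow> 'b"
    and T :: "'a \<Rightarrow> 'b"
  assumes "cstar_algebra scA stA"
    and "cstar_algebra scB stB"
    and "clinear_map scA scB T"
    and "star_hom_at stA stB T 1"
  shows "jordan_star_hom scA stA scB stB T"
proof -
  interpret M: mainloc scA stA scB stB T
    using assms by unfold_locales auto
  have star: "T (stA x) = stB (T x)" for x
  proof -
    have "stB (T (stA x)) = T x" using M.key[of x] by simp
    then have "stB (stB (T (stA x))) = stB (T x)" by simp
    then show ?thesis by simp
  qed
  have sq: "T (x * x) = T x * T x" for x
  proof -
    have "stB (T (stA (x * x))) = T x * stB (T (stA x))" using M.key[of x] by simp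
    moreover have "stB (T (stA (x * x))) = T (x * x)" using M.key[of "x * x"] by simp
    moreover have "stB (T (stA x)) = T x" using M.key[of x] by simp
    ultimately show ?thesis by simp
  qed
  have jor: "T (a * b + b * a) = T a * T b + T b * T a" for a b
  proof -
    have "T ((a + b) * (a + b)) = T (a + b) * T (a + b)" by (rule sq)
    then have "T (a * a) + T (a * b + b * a) + T (b * b) = T a * T a + (T a * T b + T b * T a) + T b * T b"
      by (simp add: M.Tadd distrib_left distrib_right add_ac)
    then show ?thesis by (simp add: sq)
  qed
  show ?thesis
    unfolding jordan_star_hom_def jordan_prod_def
    using assms(3) star jor by (simp add: M.TscR)
qed


end
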